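(* Let $X$ be a Dedekind complete Riesz space with weak order unit $e$ and $T$ a conditional expectation with $Te=e$. For a net $(x_{\alpha})_{\alpha\in A}$ in $X$ and $x\in X$, the following are equivalent: (i) $x_{\alpha}\to x$ in $T$-conditional probability; (ii) $T(|x_{\alpha}-x|\wedge u)\xrightarrow{o}0$ for every $u\in X_{+}$; (iii) $T(|x_{\alpha}-x|\wedge e)\xrightarrow{o}0$.
   Context: A conditional expectation operator on $X$ is a strictly positive, order continuous linear projection $T$ with $Te=e$ whose range is a Dedekind complete Riesz subspace. $\xrightarrow{o}$ denotes order convergence: $y_\alpha\xrightarrow{o}y$ if there is a net $z_\beta\downarrow0$ such that for every $\beta$ there is $\alpha_0$ with $|y_\alpha-y|\le z_\beta$ for all $\alpha\ge\alpha_0$. $x_\alpha\to x$ in $T$-conditional probability means $TP_{(|x_\alpha-x|-\epsilon e)^{+}}e\xrightarrow{o}0$ for every $\epsilon>0$, where $P_y$ is the band projection onto the band generated by $y$. *)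

theory Defs
  imports Complex_Main
begin

text \<open>A Dedekind complete Riesz space is modelled by a type of sort
  {ordered_real_vector, conditionally_complete_lattice}: an ordered real vector
  space whose order is a lattice (hence a Riesz space) in which every nonempty
  set bounded above has a supremum.\<close>

definition rabs :: "'a::{ordered_real_vector,lattice} \<Rightarrow> 'a" where
  "rabs x = sup x (- x)"

definition rpos :: "'a::{ordered_real_vector,lattice} \<Rightarrow> 'a" where
  "rpos x = sup x 0"

definition disj_compl :: "'a::{ordered_real_vector,lattice} set \<Rightarrow> 'a set" where
  "disj_compl S = {x. \<forall>s\<in>S. inf (rabs x) (rabs s) = 0}"

definition riesz_ideal :: "'a::{ordered_real_vector,lattice} set \<Rightarrow> bool" where
  "riesz_ideal S \<longleftrightarrow> subspace S \<and> (\<forall>x y. y \<in> S \<and> rabs x \<le> rabs y \<longrightarrow> x \<in> S)"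

definition band :: "'a::{ordered_real_vector,conditionally_complete_lattice} set \<Rightarrow> bool" where
  "band S \<longleftrightarrow> riesz_ideal S \<and> (\<forall>D. D \<subseteq> S \<and> D \<noteq> {} \<and> bdd_above D \<longrightarrow> Sup D \<in> S)"

definition band_gen :: "'a::{ordered_real_vector,conditionally_complete_lattice} \<Rightarrow> 'a set" where
  "band_gen y = \<Inter> {B. band B \<and> y \<in> B}"

text \<open>P_y: the band projection onto the band generated by y
  (X = B \<oplus> B^d in a Dedekind complete space).\<close>
definition band_proj :: "'a::{ordered_real_vector,conditionally_complete_lattice} \<Rightarrow> 'a \<Rightarrow> 'a" where
  "band_proj y x = (THE b. b \<in> band_gen y \<and> x - b \<in> disj_compl (band_gen y))"

definition weak_order_unit :: "'a::{ordered_real_vector,conditionally_complete_lattice} \<Rightarrow> bool" where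
  "weak_order_unit e \<longleftrightarrow> 0 \<le> e \<and> band_gen e = UNIV"

definition down_directed :: "'a::order set \<Rightarrow> bool" where
  "down_directed D \<longleftrightarrow> (\<forall>a\<in>D. \<forall>b\<in>D. \<exists>c\<in>D. c \<le> a \<and> c \<le> b)"

text \<open>Nets: index type of class preorder, assumed directed where used.\<close>
definition directed_index :: "'i::preorder itself \<Rightarrow> bool" where
  "directed_index _ \<longleftrightarrow> (\<forall>a b::'i. \<exists>c. a \<le> c \<and> b \<le> c)"

text \<open>Order convergence of a net: there is a net z_beta decreasing to 0
  (taken, w.l.o.g., as a downward directed set D with infimum 0 indexed by itself)
  such that for every beta, eventually |y_alpha - y| <= z_beta.\<close>
definition oconv :: "('i::preorder \<Rightarrow> 'a::{ordered_real_vector,conditionally_complete_lattice}) \<Rightarrow> 'a \<Rightarrow> bool" where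
  "oconv y l \<longleftrightarrow> (\<exists>D. D \<noteq> {} \<and> down_directed D \<and> (\<forall>z\<in>D. 0 \<le> z) \<and> Inf D = 0 \<and>
      (\<forall>z\<in>D. \<exists>a0. \<forall>a. a0 \<le> a \<longrightarrow> rabs (y a - l) \<le> z))"

definition order_continuous :: "('a::{ordered_real_vector,conditionally_complete_lattice} \<Rightarrow> 'a) \<Rightarrow> bool" where
  "order_continuous T \<longleftrightarrow> (\<forall>D. D \<noteq> {} \<and> down_directed D \<and> (\<forall>z\<in>D. 0 \<le> z) \<and> Inf D = 0
      \<longrightarrow> Inf (T ` D) = 0)"

definition strictly_positive :: "('a::{ordered_real_vector,lattice} \<Rightarrow> 'a) \<Rightarrow> bool" where
  "strictly_positive T \<longleftrightarrow> (\<forall>x. 0 \<le> x \<longrightarrow> 0 \<le> T x) \<and> (\<forall>x. 0 < x \<longrightarrow> 0 < T x)"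

definition riesz_subspace :: "'a::{ordered_real_vector,lattice} set \<Rightarrow> bool" where
  "riesz_subspace S \<longleftrightarrow> subspace S \<and> (\<forall>x\<in>S. \<forall>y\<in>S. sup x y \<in> S \<and> inf x y \<in> S)"

definition dedekind_complete_subset :: "'a::order set \<Rightarrow> bool" where
  "dedekind_complete_subset S \<longleftrightarrow> (\<forall>D. D \<subseteq> S \<and> D \<noteq> {} \<and> (\<exists>u\<in>S. \<forall>d\<in>D. d \<le> u) \<longrightarrow>
      (\<exists>s\<in>S. (\<forall>d\<in>D. d \<le> s) \<and> (\<forall>u\<in>S. (\<forall>d\<in>D. d \<le> u) \<longrightarrow> s \<le> u)))"

definition cond_exp_op :: "('a::{ordered_real_vector,conditionally_complete_lattice} \<Rightarrow> 'a) \<Rightarrow> 'a \<Rightarrow> bool" where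
  "cond_exp_op T e \<longleftrightarrow> linear T \<and> (\<forall>x. T (T x) = T x) \<and> strictly_positive T \<and>
      order_continuous T \<and> T e = e \<and> riesz_subspace (range T) \<and> dedekind_complete_subset (range T)"

end

theory Submission
  imports Defs "HOL-Library.Lattice_Algebras"
begin


lemma LAG: "class.lattice_ab_group_add (+) (0::'a::{ordered_real_vector,lattice}) (-) uminus (\<le>) (<) inf sup"
  by (unfold_locales)

lemma add_eq_inf_sup': "(a::'a::{ordered_real_vector,lattice}) + b = sup a b + inf a b"
  by (rule lattice_ab_group_add.add_eq_inf_sup[OF LAG])

lemma add_inf_left': "(a::'a::{ordered_real_vector,lattice}) + inf b c = inf (a+b) (a+c)"
proof (rule antisym)
  show "a + inf b c \<le> inf (a+b) (a+c)" by (simp add: add_left_mono)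
  have "inf (a+b) (a+c) - a \<le> b" "inf (a+b) (a+c) - a \<le> c"
    by (simp_all add: diff_le_eq add.commute)
  hence "inf (a+b) (a+c) - a \<le> inf b c" by simp
  hence "inf (a+b) (a+c) \<le> inf b c + a" by (simp only: diff_le_eq)
  thus "inf (a+b) (a+c) \<le> a + inf b c" by (simp add: add.commute)
qed

lemma add_sup_left': "(a::'a::{ordered_real_vector,lattice}) + sup b c = sup (a+b) (a+c)"
proof (rule antisym)
  show "sup (a+b) (a+c) \<le> a + sup b c" by (simp add: add_left_mono)
  have "b \<le> sup (a+b) (a+c) - a" "c \<le> sup (a+b) (a+c) - a"
    by (simp_all add: le_diff_eq add.commute)
  hence "sup b c \<le> sup (a+b) (a+c) - a" by simp
  hence "sup b c + a \<le> sup (a+b) (a+c)" by (simp add: le_diff_eq)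
  thus "a + sup b c \<le> sup (a+b) (a+c)" by (simp add: add.commute)
qed

lemma scaleR_inf': assumes "0 \<le> c"
  shows "c *\<^sub>R inf a b = inf (c *\<^sub>R a) (c *\<^sub>R (b::'a::{ordered_real_vector,lattice}))"
proof (cases "c = 0")
  case True thus ?thesis by simp
next
  case False
  hence c: "c > 0" using assms by simp
  show ?thesis
  proof (rule antisym)
    show "c *\<^sub>R inf a b \<le> inf (c *\<^sub>R a) (c *\<^sub>R b)"
      by (simp add: assms scaleR_left_mono)
    have "(1/c) *\<^sub>R inf (c *\<^sub>R a) (c *\<^sub>R b) \<le> (1/c) *\<^sub>R (c *\<^sub>R a)"
      using c by (intro scaleR_left_mono) auto
    also have "\<dots> = a" using c by simp
    finally have 1: "(1/c) *\<^sub>R inf (c *\<^sub>R a) (c *\<^sub>R b) \<le> a" .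
    have "(1/c) *\<^sub>R inf (c *\<^sub>R a) (c *\<^sub>R b) \<le> (1/c) *\<^sub>R (c *\<^sub>R b)"
      using c by (intro scaleR_left_mono) auto
    also have "\<dots> = b" using c by simp
    finally have 2: "(1/c) *\<^sub>R inf (c *\<^sub>R a) (c *\<^sub>R b) \<le> b" .
    from 1 2 have "(1/c) *\<^sub>R inf (c *\<^sub>R a) (c *\<^sub>R b) \<le> inf a b" by simp
    hence "c *\<^sub>R ((1/c) *\<^sub>R inf (c *\<^sub>R a) (c *\<^sub>R b)) \<le> c *\<^sub>R inf a b"
      by (rule scaleR_left_mono) (use c in simp)
    moreover have "c *\<^sub>R ((1/c) *\<^sub>R inf (c *\<^sub>R a) (c *\<^sub>R b)) = inf (c *\<^sub>R a) (c *\<^sub>R b)"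
      using c by simp
    ultimately show "inf (c *\<^sub>R a) (c *\<^sub>R b) \<le> c *\<^sub>R inf a b" by simp
  qed
qed

lemma scaleR_sup': assumes "0 \<le> c"
  shows "c *\<^sub>R sup a b = sup (c *\<^sub>R a) (c *\<^sub>R (b::'a::{ordered_real_vector,lattice}))"
proof (cases "c = 0")
  case True thus ?thesis by simp
next
  case False
  hence c: "c > 0" using assms by simp
  show ?thesis
  proof (rule antisym)
    show "sup (c *\<^sub>R a) (c *\<^sub>R b) \<le> c *\<^sub>R sup a b"
      by (simp add: assms scaleR_left_mono)
    have "a = (1/c) *\<^sub>R (c *\<^sub>R a)" using c by simp
    also have "\<dots> \<le> (1/c) *\<^sub>R sup (c *\<^sub>R a) (c *\<^sub>R b)"
      using c by (intro scaleR_left_mono) auto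
    finally have 1: "a \<le> (1/c) *\<^sub>R sup (c *\<^sub>R a) (c *\<^sub>R b)" .
    have "b = (1/c) *\<^sub>R (c *\<^sub>R b)" using c by simp
    also have "\<dots> \<le> (1/c) *\<^sub>R sup (c *\<^sub>R a) (c *\<^sub>R b)"
      using c by (intro scaleR_left_mono) auto
    finally have 2: "b \<le> (1/c) *\<^sub>R sup (c *\<^sub>R a) (c *\<^sub>R b)" .
    from 1 2 have "sup a b \<le> (1/c) *\<^sub>R sup (c *\<^sub>R a) (c *\<^sub>R b)" by simp
    hence "c *\<^sub>R sup a b \<le> c *\<^sub>R ((1/c) *\<^sub>R sup (c *\<^sub>R a) (c *\<^sub>R b))"
      by (rule scaleR_left_mono) (use c in simp)
    moreover have "c *\<^sub>R ((1/c) *\<^sub>R sup (c *\<^sub>R a) (c *\<^sub>R b)) = sup (c *\<^sub>R a) (c *\<^sub>R b)"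
      using c by simp
    ultimately show "c *\<^sub>R sup a b \<le> sup (c *\<^sub>R a) (c *\<^sub>R b)" by simp
  qed
qed

lemma rabs_nonneg: "0 \<le> rabs (x::'a::{ordered_real_vector,lattice})"
proof -
  have "x + (-x) \<le> rabs x + rabs x" unfolding rabs_def
    by (intro add_mono) auto
  hence "0 \<le> 2 *\<^sub>R rabs x" by (simp add: scaleR_2)
  hence "(1/2) *\<^sub>R 0 \<le> (1/2::real) *\<^sub>R (2 *\<^sub>R rabs x)" by (intro scaleR_left_mono) auto
  thus ?thesis by simp
qed

lemma rabs_of_nonneg: "0 \<le> (x::'a::{ordered_real_vector,lattice}) \<Longrightarrow> rabs x = x"
proof -
  assume h: "0 \<le> x"
  hence "- x \<le> x" using order_trans[of "-x" 0 x] by simp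
  thus ?thesis unfolding rabs_def by (simp add: sup.absorb1)
qed

lemma rabs_minus: "rabs (- (x::'a::{ordered_real_vector,lattice})) = rabs x"
  unfolding rabs_def by (simp add: sup_commute)

lemma le_rabs: "(x::'a::{ordered_real_vector,lattice}) \<le> rabs x" "- x \<le> rabs x"
  unfolding rabs_def by auto

lemma rabs_zero: "rabs (x::'a::{ordered_real_vector,lattice}) = 0 \<Longrightarrow> x = 0"
proof -
  assume h: "rabs x = 0"
  have 1: "x \<le> 0" using le_rabs(1)[of x] h by simp
  have "- x \<le> 0" using le_rabs(2)[of x] h by simp
  hence "0 \<le> x" by simp
  with 1 show "x = 0" by (rule antisym)
qed

lemma rabs_triangle: "rabs ((x::'a::{ordered_real_vector,lattice}) + y) \<le> rabs x + rabs y"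
proof -
  have "x + y \<le> rabs x + rabs y" by (intro add_mono le_rabs)
  moreover have "-(x + y) \<le> rabs x + rabs y" using add_mono[OF le_rabs(2) le_rabs(2), of x y] by simp
  ultimately show ?thesis unfolding rabs_def[of "x+y"] by simp
qed

lemma rabs_scaleR: "rabs (c *\<^sub>R (x::'a::{ordered_real_vector,lattice})) = \<bar>c\<bar> *\<^sub>R rabs x"
proof (cases "0 \<le> c")
  case True thus ?thesis unfolding rabs_def using scaleR_sup'[OF True, of x "-x"] by simp
next
  case False
  hence "0 \<le> -c" by simp
  from scaleR_sup'[OF this, of x "-x"] False show ?thesis unfolding rabs_def
    by (simp add: sup_commute)
qed

lemma rpos_nonneg: "0 \<le> rpos (x::'a::{ordered_real_vector,lattice})"
  unfolding rpos_def by simp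

lemma le_rpos: "(x::'a::{ordered_real_vector,lattice}) \<le> rpos x"
  unfolding rpos_def by simp

lemma rpos_mono: "(x::'a::{ordered_real_vector,lattice}) \<le> y \<Longrightarrow> rpos x \<le> rpos y"
  unfolding rpos_def by (rule sup_mono) simp_all

lemma rpos_le_rabs: "rpos (x::'a::{ordered_real_vector,lattice}) \<le> rabs x" "rpos (-x) \<le> rabs x"
  unfolding rpos_def using le_rabs[of x] rabs_nonneg[of x] by auto

lemma rneg_eq: "rpos (- (x::'a::{ordered_real_vector,lattice})) = rpos x - x"
  unfolding rpos_def
proof -
  have "- x + sup x 0 = sup (-x + x) (-x + 0)" by (rule add_sup_left')
  thus "sup (- x) 0 = sup x 0 - x" by (simp add: sup_commute algebra_simps)
qed

lemma rabs_parts: "rabs (x::'a::{ordered_real_vector,lattice}) = rpos x + rpos (-x)"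
proof -
  have "rpos x + rpos (-x) = sup (-x) 0 + sup x 0" unfolding rpos_def by (simp add: add.commute)
  also have "\<dots> = sup (sup (-x) 0 + x) (sup (-x) 0 + 0)"
    by (rule add_sup_left')
  also have "sup (-x) 0 + x = sup 0 x" using add_sup_left'[of x "-x" 0] by (simp add: add.commute)
  finally have "rpos x + rpos (-x) = sup (sup 0 x) (sup (-x) 0)" by simp
  also have "\<dots> = sup (sup x (-x)) 0" by (simp add: sup_assoc sup_commute sup_left_commute)
  also have "\<dots> = sup x (-x)" using rabs_nonneg[of x] unfolding rabs_def by (simp add: sup.absorb1)
  finally show ?thesis unfolding rabs_def by simp
qed

lemma parts_disj: "inf (rpos (x::'a::{ordered_real_vector,lattice})) (rpos (-x)) = 0"
proof -
  have "inf (rpos x) (rpos (-x)) = inf (rpos x + 0) (rpos x + (-x))" by (simp add: rneg_eq)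
  also have "\<dots> = rpos x + inf 0 (-x)" by (simp add: add_inf_left')
  also have "inf 0 (-x) = - sup 0 x"
    using lattice_ab_group_add.neg_sup_eq_inf[OF LAG, of 0 x] by simp
  finally show ?thesis unfolding rpos_def by (simp add: sup_commute)
qed

lemma inf_add_le:
  fixes p q r :: "'a::{ordered_real_vector,lattice}"
  assumes "0 \<le> p" "0 \<le> q" "0 \<le> r"
  shows "inf p (q + r) \<le> inf p q + inf p r"
proof -
  have "inf p (q + r) \<le> inf (p + r) (q + r)"
    by (rule inf_mono) (use assms in \<open>simp_all add: add_increasing2\<close>)
  also have "\<dots> = inf p q + r" using add_inf_left'[of r p q] by (simp add: add.commute)
  finally have 1: "inf p (q + r) \<le> inf p q + r" .
  have "inf p (q + r) \<le> p" by simp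
  also have "p \<le> inf p q + p" using assms by (intro add_increasing) simp_all
  finally have 2: "inf p (q + r) \<le> inf p q + p" .
  have "inf p (q + r) \<le> inf (inf p q + r) (inf p q + p)" using 1 2 by simp
  also have "\<dots> = inf p q + inf r p" by (simp add: add_inf_left')
  finally show ?thesis by (simp add: inf_commute)
qed

lemma inf_scale_le:
  fixes a v :: "'a::{ordered_real_vector,lattice}"
  assumes "0 \<le> t" "0 \<le> v" "0 \<le> a"
  shows "inf (t *\<^sub>R a) v \<le> max t 1 *\<^sub>R inf a v"
proof -
  have "inf (t *\<^sub>R a) v \<le> inf (max t 1 *\<^sub>R a) (max t 1 *\<^sub>R v)"
  proof (rule inf_mono)
    show "t *\<^sub>R a \<le> max t 1 *\<^sub>R a" using assms
      by (intro scaleR_right_mono) auto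
    show "v \<le> max t 1 *\<^sub>R v" using scaleR_right_mono[of 1 "max t 1" v] assms by simp
  qed
  also have "\<dots> = max t 1 *\<^sub>R inf a v" by (rule scaleR_inf'[symmetric]) simp
  finally show ?thesis .
qed



lemma keyK:
  fixes a b :: "'a::{ordered_real_vector,lattice}"
  assumes a: "0 \<le> a" and b: "0 \<le> b" and t: "0 \<le> t"
  shows "inf (t *\<^sub>R rpos (a - b)) b \<le> a"
proof -
  let ?w = "rpos (a - b)"
  have bdec: "b = inf a b + rpos (b - a)"
  proof -
    have "inf a b + rpos (b - a) = inf a b + sup (b - a) 0" unfolding rpos_def ..
    also have "\<dots> = sup (inf a b + (b - a)) (inf a b)" by (simp add: add_sup_left')
    also have "inf a b + (b - a) = b + inf a b - a" by (simp add: algebra_simps)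
    also have "b + inf a b - a = (a + b - sup a b) + b - a" using add_eq_inf_sup'[of a b]
      by (simp add: algebra_simps)
    also have "\<dots> = b + b - sup a b" by (simp add: algebra_simps)
    finally have 1: "inf a b + rpos (b - a) = sup (b + b - sup a b) (inf a b)" .
    have "b + b - sup a b \<le> b" using sup_ge2[of b a] by (simp add: algebra_simps)
    moreover have "inf a b \<le> b" by simp
    ultimately have "inf a b + rpos (b - a) \<le> b" unfolding 1 by simp
    moreover have "b \<le> inf a b + rpos (b - a)"
    proof -
      have "b - inf a b = b + sup (-a) (-b)"
        using lattice_ab_group_add.neg_inf_eq_sup[OF LAG, of a b] by simp
      also have "\<dots> = sup (b - a) 0" by (simp add: add_sup_left')
      finally show ?thesis unfolding rpos_def by (simp add: algebra_simps)
    qed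
    ultimately show ?thesis by (rule antisym[rotated])
  qed
  have w0: "0 \<le> t *\<^sub>R ?w" by (intro scaleR_nonneg_nonneg t rpos_nonneg)
  have ab0: "0 \<le> inf a b" using a b by simp
  have "inf (t *\<^sub>R ?w) b = inf (t *\<^sub>R ?w) (inf a b + rpos (b - a))" using bdec by simp
  also have "\<dots> \<le> inf (t *\<^sub>R ?w) (inf a b) + inf (t *\<^sub>R ?w) (rpos (b - a))"
    by (rule inf_add_le[OF w0 ab0 rpos_nonneg])
  also have "inf (t *\<^sub>R ?w) (rpos (b - a)) = 0"
  proof (rule antisym)
    have "inf (t *\<^sub>R ?w) (rpos (b - a)) \<le> max t 1 *\<^sub>R inf ?w (rpos (b - a))"
      by (rule inf_scale_le[OF t rpos_nonneg rpos_nonneg])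
    also have "inf ?w (rpos (b - a)) = 0" using parts_disj[of "a - b"] by simp
    finally show "inf (t *\<^sub>R ?w) (rpos (b - a)) \<le> 0" by simp
    show "0 \<le> inf (t *\<^sub>R ?w) (rpos (b - a))" using w0 rpos_nonneg by simp
  qed
  also have "inf (t *\<^sub>R ?w) (inf a b) + 0 \<le> a"
    by (simp add: le_infI2)
  finally show ?thesis .
qed

lemma arch:
  fixes m e :: "'a::{ordered_real_vector,conditionally_complete_lattice}"
  assumes h: "\<And>n::nat. real n *\<^sub>R m \<le> e"
  shows "m \<le> 0"
proof -
  let ?R = "range (\<lambda>n::nat. real n *\<^sub>R m)"
  have bdd: "bdd_above ?R" using h by (auto intro!: bdd_aboveI)
  let ?S = "Sup ?R"
  have "real n *\<^sub>R m \<le> ?S - m" for n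
  proof -
    have "real (Suc n) *\<^sub>R m \<le> ?S" by (rule cSup_upper[OF rangeI bdd])
    thus ?thesis by (simp add: algebra_simps le_diff_eq)
  qed
  hence "?S \<le> ?S - m" by (intro cSup_least) auto
  thus ?thesis by (simp add: le_diff_eq)
qed

lemma arch2:
  fixes m e :: "'a::{ordered_real_vector,conditionally_complete_lattice}"
  assumes e: "0 \<le> e" and h: "\<And>\<epsilon>. \<epsilon> > 0 \<Longrightarrow> m \<le> \<epsilon> *\<^sub>R e"
  shows "m \<le> 0"
proof (rule arch[of m e])
  fix n :: nat
  show "real n *\<^sub>R m \<le> e"
  proof (cases "n = 0")
    case True thus ?thesis using e by simp
  next
    case False
    hence n: "real n > 0" by simp
    have "m \<le> (1 / real n) *\<^sub>R e" using h n by simp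
    hence "real n *\<^sub>R m \<le> real n *\<^sub>R ((1 / real n) *\<^sub>R e)"
      by (rule scaleR_left_mono) (use n in simp)
    thus ?thesis using n by simp
  qed
qed



lemma band_subspace: "band B \<Longrightarrow> subspace B"
  unfolding band_def riesz_ideal_def by simp

lemma band_solid: "band B \<Longrightarrow> y \<in> B \<Longrightarrow> rabs x \<le> rabs y \<Longrightarrow> x \<in> B"
  unfolding band_def riesz_ideal_def by blast

lemma band_Sup: "band B \<Longrightarrow> D \<subseteq> B \<Longrightarrow> D \<noteq> {} \<Longrightarrow> bdd_above D \<Longrightarrow> Sup D \<in> B"
  unfolding band_def by blast


lemma disj_band:
  fixes S :: "'a::{ordered_real_vector,conditionally_complete_lattice} set"
  shows "band (disj_compl S)"
proof -
  let ?C = "disj_compl S"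
  have mem: "x \<in> ?C \<longleftrightarrow> (\<forall>s\<in>S. inf (rabs x) (rabs s) = 0)" for x
    unfolding disj_compl_def by simp
  have solid: "x \<in> ?C" if "y \<in> ?C" "rabs x \<le> rabs y" for x y
  proof -
    have "inf (rabs x) (rabs s) = 0" if "s \<in> S" for s
    proof (rule antisym)
      have "inf (rabs x) (rabs s) \<le> inf (rabs y) (rabs s)"
        using \<open>rabs x \<le> rabs y\<close> by (intro inf_mono) simp_all
      also have "\<dots> = 0" using \<open>y \<in> ?C\<close> \<open>s \<in> S\<close> mem by blast
      finally show "inf (rabs x) (rabs s) \<le> 0" .
      show "0 \<le> inf (rabs x) (rabs s)" by (simp add: rabs_nonneg)
    qed
    thus ?thesis using mem by blast
  qed
  have sub: "subspace ?C"
  proof (rule subspaceI)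
    have "inf (rabs (0::'a)) (rabs s) = 0" for s
      using rabs_of_nonneg[of "0::'a"] inf.absorb1[OF rabs_nonneg[of s]] by simp
    thus "0 \<in> ?C" unfolding mem by blast
  next
    fix x y assume x: "x \<in> ?C" and y: "y \<in> ?C"
    have "inf (rabs (x + y)) (rabs s) = 0" if "s \<in> S" for s
    proof (rule antisym)
      have "inf (rabs (x + y)) (rabs s) \<le> inf (rabs s) (rabs x + rabs y)"
        unfolding inf_commute[of "rabs (x+y)"] by (intro inf_mono order_refl rabs_triangle)
      also have "\<dots> \<le> inf (rabs s) (rabs x) + inf (rabs s) (rabs y)"
        by (rule inf_add_le[OF rabs_nonneg rabs_nonneg rabs_nonneg])
      also have "\<dots> = 0" using x y that mem by (simp add: inf_commute)
      finally show "inf (rabs (x + y)) (rabs s) \<le> 0" .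
      show "0 \<le> inf (rabs (x + y)) (rabs s)" by (simp add: rabs_nonneg)
    qed
    thus "x + y \<in> ?C" using mem by blast
  next
    fix c :: real and x assume x: "x \<in> ?C"
    have "inf (rabs (c *\<^sub>R x)) (rabs s) = 0" if "s \<in> S" for s
    proof (rule antisym)
      have "inf (rabs (c *\<^sub>R x)) (rabs s) = inf (\<bar>c\<bar> *\<^sub>R rabs x) (rabs s)"
        by (simp add: rabs_scaleR)
      also have "\<dots> \<le> max \<bar>c\<bar> 1 *\<^sub>R inf (rabs x) (rabs s)"
        by (rule inf_scale_le) (simp_all add: rabs_nonneg)
      also have "\<dots> = 0" using x that mem by simp
      finally show "inf (rabs (c *\<^sub>R x)) (rabs s) \<le> 0" .
      show "0 \<le> inf (rabs (c *\<^sub>R x)) (rabs s)" by (simp add: rabs_nonneg)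
    qed
    thus "c *\<^sub>R x \<in> ?C" using mem by blast
  qed
  have supc: "Sup D \<in> ?C" if D: "D \<subseteq> ?C" "D \<noteq> {}" "bdd_above D" for D
  proof -
    let ?s = "Sup D"
    have "inf (rabs ?s) (rabs t) = 0" if t: "t \<in> S" for t
    proof -
      let ?v = "rabs t"
      have v0: "0 \<le> ?v" by (rule rabs_nonneg)
      obtain d0 where d0: "d0 \<in> D" using D by blast
      have neg: "inf (rpos (- ?s)) ?v \<le> 0"
      proof -
        have "d0 \<le> ?s" by (rule cSup_upper[OF d0 D(3)])
        hence "rpos (- ?s) \<le> rpos (- d0)" by (intro rpos_mono) simp
        also have "\<dots> \<le> rabs d0" by (rule rpos_le_rabs)
        finally have "inf (rpos (- ?s)) ?v \<le> inf (rabs d0) ?v" by (intro inf_mono order_refl)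
        also have "\<dots> = 0" using d0 D(1) t mem by blast
        finally show ?thesis .
      qed
      have pos: "inf (rpos ?s) ?v \<le> 0"
      proof -
        let ?M = "sup (rpos ?s) ?v - ?v"
        have "d \<le> ?M" if d: "d \<in> D" for d
        proof -
          have "inf (rpos d) ?v \<le> inf (rabs d) ?v" using rpos_le_rabs(1)[of d] by (intro inf_mono order_refl)
          also have "\<dots> = 0" using d D(1) t mem by blast
          finally have "inf (rpos d) ?v = 0" using rpos_nonneg[of d] v0 by (simp add: antisym)
          hence "rpos d + ?v = sup (rpos d) ?v" using add_eq_inf_sup'[of "rpos d" ?v] by simp
          hence "rpos d = sup (rpos d) ?v - ?v" by (simp add: eq_diff_eq)
          also have "\<dots> \<le> ?M"
          proof -
            have "d \<le> ?s" by (rule cSup_upper[OF d D(3)])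
            hence "rpos d \<le> rpos ?s" by (rule rpos_mono)
            hence "sup (rpos d) ?v \<le> sup (rpos ?s) ?v" by (intro sup_mono order_refl)
            thus ?thesis by simp
          qed
          finally show ?thesis using le_rpos[of d] by simp
        qed
        hence "?s \<le> ?M" using D(2) by (intro cSup_least) auto
        moreover have "0 \<le> ?M" by (simp add: le_diff_eq)
        ultimately have "rpos ?s \<le> ?M" unfolding rpos_def by simp
        hence "rpos ?s + ?v \<le> sup (rpos ?s) ?v" by (simp add: le_diff_eq)
        thus ?thesis using add_eq_inf_sup'[of "rpos ?s" ?v] by simp
      qed
      have "inf (rabs ?s) ?v \<le> inf ?v (rpos ?s) + inf ?v (rpos (- ?s))"
        unfolding rabs_parts[of ?s] using inf_add_le[OF v0 rpos_nonneg rpos_nonneg]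
        by (simp add: inf_commute)
      also have "\<dots> \<le> 0" using neg pos by (simp add: inf_commute add_nonpos_nonpos)
      finally show ?thesis using rabs_nonneg[of ?s] v0 by (simp add: antisym)
    qed
    thus ?thesis using mem by blast
  qed
  show ?thesis unfolding band_def riesz_ideal_def using sub solid supc by blast
qed

lemma band_gen_subspace: "subspace (band_gen y)"
  unfolding band_gen_def by (rule subspace_Inter) (auto intro: band_subspace)

lemma band_gen_min: "band B \<Longrightarrow> y \<in> B \<Longrightarrow> band_gen y \<subseteq> B"
  unfolding band_gen_def by blast



definition Sp :: "'a::{ordered_real_vector,conditionally_complete_lattice} \<Rightarrow> 'a \<Rightarrow> 'a" where
  "Sp w e = Sup (range (\<lambda>n::nat. inf (real n *\<^sub>R w) e))"

lemma Sp_bdd: "bdd_above (range (\<lambda>n::nat. inf (real n *\<^sub>R w) (e::'a::{ordered_real_vector,conditionally_complete_lattice})))"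
  by (rule bdd_aboveI[of _ e]) auto

lemma Sp_upper: "inf (real n *\<^sub>R w) e \<le> Sp w e"
  unfolding Sp_def by (rule cSup_upper[OF rangeI Sp_bdd])

lemma Sp_least: "(\<And>n::nat. inf (real n *\<^sub>R w) e \<le> z) \<Longrightarrow> Sp w e \<le> z"
  unfolding Sp_def by (rule cSup_least) auto

lemma Sp_le_e: "Sp w e \<le> e"
  by (rule Sp_least) simp

lemma Sp_nonneg: "0 \<le> e \<Longrightarrow> 0 \<le> Sp w e"
  using Sp_upper[of 0 w e] by (simp add: inf.absorb1)

lemma Sp_ge: "inf w e \<le> Sp w e"
  using Sp_upper[of 1 w e] by simp

lemma proj_eq:
  fixes w e :: "'a::{ordered_real_vector,conditionally_complete_lattice}"
  assumes w: "0 \<le> w" and e: "0 \<le> e"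
  shows "band_proj w e = Sp w e"
proof -
  let ?p = "Sp w e"
  have inB: "?p \<in> band_gen w"
    unfolding band_gen_def
  proof (rule InterI)
    fix B assume "B \<in> {B. band B \<and> w \<in> B}"
    hence B: "band B" "w \<in> B" by auto
    let ?R = "range (\<lambda>n::nat. inf (real n *\<^sub>R w) e)"
    have "?R \<subseteq> B"
    proof
      fix r assume "r \<in> ?R"
      then obtain n :: nat where r: "r = inf (real n *\<^sub>R w) e" by blast
      have nw: "real n *\<^sub>R w \<in> B" by (rule subspace_scale[OF band_subspace[OF B(1)] B(2)])
      have nw0: "0 \<le> real n *\<^sub>R w" using w by (intro scaleR_nonneg_nonneg) simp_all
      have i0: "0 \<le> inf (real n *\<^sub>R w) e" using nw0 e by simp
      have "rabs r \<le> rabs (real n *\<^sub>R w)"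
        unfolding r rabs_of_nonneg[OF nw0] rabs_of_nonneg[OF i0] by simp
      thus "r \<in> B" by (rule band_solid[OF B(1) nw])
    qed
    thus "?p \<in> B" unfolding Sp_def by (intro band_Sup[OF B(1)] Sp_bdd) auto
  qed
  have inD: "e - ?p \<in> disj_compl (band_gen w)"
  proof -
    let ?r = "e - ?p"
    have r0: "0 \<le> ?r" using Sp_le_e[of w e] by simp
    let ?q = "inf ?r w"
    have q0: "0 \<le> ?q" using r0 w by simp
    have ind: "real n *\<^sub>R ?q \<le> inf (real n *\<^sub>R w) e" for n :: nat
    proof (induction n)
      case 0 thus ?case using e by (simp add: inf.absorb1)
    next
      case (Suc n)
      have "real (Suc n) *\<^sub>R ?q = real n *\<^sub>R ?q + ?q" by (simp add: algebra_simps)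
      also have "\<dots> \<le> inf (real n *\<^sub>R w) e + ?q" using Suc.IH by (rule add_right_mono)
      also have "inf (real n *\<^sub>R w) e + ?q \<le> inf (real (Suc n) *\<^sub>R w) e"
      proof (rule le_infI)
        have "inf (real n *\<^sub>R w) e + ?q \<le> real n *\<^sub>R w + w" by (intro add_mono) simp_all
        thus "inf (real n *\<^sub>R w) e + ?q \<le> real (Suc n) *\<^sub>R w" by (simp add: algebra_simps)
        have "inf (real n *\<^sub>R w) e + ?q \<le> ?p + ?r" by (intro add_mono Sp_upper) simp
        thus "inf (real n *\<^sub>R w) e + ?q \<le> e" by simp
      qed
      finally show ?case .
    qed
    have "real n *\<^sub>R ?q \<le> e" for n :: nat using ind[of n] by (rule order_trans) simp
    hence "?q \<le> 0" by (rule arch)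
    hence q: "?q = 0" using q0 by (simp add: antisym)
    have "inf (rabs w) (rabs ?r) = 0"
      unfolding rabs_of_nonneg[OF w] rabs_of_nonneg[OF r0] using q by (simp only: inf_commute)
    hence "w \<in> disj_compl {?r}" unfolding disj_compl_def by blast
    hence sub: "band_gen w \<subseteq> disj_compl {?r}" by (intro band_gen_min disj_band)
    have "inf (rabs ?r) (rabs s) = 0" if "s \<in> band_gen w" for s
    proof -
      have "s \<in> disj_compl {?r}" using sub that by blast
      hence "inf (rabs s) (rabs ?r) = 0" unfolding disj_compl_def by blast
      thus ?thesis by (simp only: inf_commute)
    qed
    thus ?thesis unfolding disj_compl_def by blast
  qed
  have uniq: "b = ?p" if b: "b \<in> band_gen w" "e - b \<in> disj_compl (band_gen w)" for b
  proof -
    have d1: "?p - b \<in> band_gen w" by (rule subspace_diff[OF band_gen_subspace inB b(1)])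
    have "(e - b) - (e - ?p) \<in> disj_compl (band_gen w)"
      by (rule subspace_diff[OF band_subspace[OF disj_band] b(2) inD])
    hence d2: "?p - b \<in> disj_compl (band_gen w)" by simp
    have "inf (rabs (?p - b)) (rabs (?p - b)) = 0" using d1 d2 unfolding disj_compl_def by blast
    hence "rabs (?p - b) = 0" by simp
    hence "?p - b = 0" by (rule rabs_zero)
    thus ?thesis by simp
  qed
  show ?thesis unfolding band_proj_def
  proof (rule the_equality)
    show "Sp w e \<in> band_gen w \<and> e - Sp w e \<in> disj_compl (band_gen w)" using inB inD by blast
  next
    fix b assume "b \<in> band_gen w \<and> e - b \<in> disj_compl (band_gen w)"
    thus "b = Sp w e" using uniq by blast
  qed
qed

definition EB :: "('i::preorder \<Rightarrow> 'a::{ordered_real_vector,lattice}) \<Rightarrow> 'a set" where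
  "EB y = {v. 0 \<le> v \<and> (\<exists>a0. \<forall>a. a0 \<le> a \<longrightarrow> rabs (y a) \<le> v)}"

lemma oc_imp:
  fixes y :: "'i::preorder \<Rightarrow> 'a::{ordered_real_vector,conditionally_complete_lattice}"
  assumes "oconv y 0" and "\<forall>v\<in>EB y. m \<le> v"
  shows "m \<le> 0"
proof -
  obtain D where D: "D \<noteq> {}" "Inf D = 0" "\<forall>z\<in>D. 0 \<le> z"
    "\<forall>z\<in>D. \<exists>a0. \<forall>a. a0 \<le> a \<longrightarrow> rabs (y a - 0) \<le> z"
    using assms(1) unfolding oconv_def by blast
  have "D \<subseteq> EB y" unfolding EB_def using D(3,4) by auto
  hence "\<forall>z\<in>D. m \<le> z" using assms(2) by blast
  hence "m \<le> Inf D" using D(1) by (intro cInf_greatest) auto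
  thus ?thesis using D(2) by simp
qed

lemma oc_intro:
  fixes y :: "'i::preorder \<Rightarrow> 'a::{ordered_real_vector,conditionally_complete_lattice}"
  assumes dir: "directed_index TYPE('i)" and v0: "v0 \<in> EB y"
    and lb: "\<And>m. \<forall>v\<in>EB y. m \<le> v \<Longrightarrow> m \<le> 0"
  shows "oconv y 0"
proof -
  let ?E = "EB y"
  have ne: "?E \<noteq> {}" using v0 by blast
  have nn: "\<forall>z\<in>?E. 0 \<le> z" unfolding EB_def by auto
  have dd: "down_directed ?E" unfolding down_directed_def
  proof (intro ballI)
    fix v1 v2 assume v1: "v1 \<in> ?E" and v2: "v2 \<in> ?E"
    obtain a1 where a1: "\<forall>a. a1 \<le> a \<longrightarrow> rabs (y a) \<le> v1" using v1 unfolding EB_def by blast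
    obtain a2 where a2: "\<forall>a. a2 \<le> a \<longrightarrow> rabs (y a) \<le> v2" using v2 unfolding EB_def by blast
    obtain c where c: "a1 \<le> c" "a2 \<le> c" using dir unfolding directed_index_def by blast
    have "\<forall>a. c \<le> a \<longrightarrow> rabs (y a) \<le> inf v1 v2"
    proof (intro allI impI)
      fix a assume "c \<le> a"
      hence "a1 \<le> a" "a2 \<le> a" using c order_trans by blast+
      thus "rabs (y a) \<le> inf v1 v2" using a1 a2 by simp
    qed
    moreover have "0 \<le> inf v1 v2" using v1 v2 nn by simp
    ultimately have "inf v1 v2 \<in> ?E" unfolding EB_def by blast
    thus "\<exists>c\<in>?E. c \<le> v1 \<and> c \<le> v2" by (intro bexI[of _ "inf v1 v2"]) auto
  qed
  have bb: "bdd_below ?E" using nn by (intro bdd_belowI[of _ 0]) auto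
  have "\<forall>v\<in>?E. Inf ?E \<le> v" using cInf_lower[OF _ bb] by blast
  hence "Inf ?E \<le> 0" by (rule lb)
  moreover have "0 \<le> Inf ?E" using ne nn by (intro cInf_greatest) auto
  ultimately have inf0: "Inf ?E = 0" by (rule antisym)
  have ev: "\<forall>z\<in>?E. \<exists>a0. \<forall>a. a0 \<le> a \<longrightarrow> rabs (y a - 0) \<le> z" unfolding EB_def by auto
  show ?thesis unfolding oconv_def
    by (rule exI[of _ ?E]) (intro conjI ne dd nn inf0 ev)
qed



lemma T_add: "cond_exp_op T e \<Longrightarrow> T (x + y) = T x + T y"
  unfolding cond_exp_op_def linear_iff by blast

lemma T_scale: "cond_exp_op T e \<Longrightarrow> T (c *\<^sub>R x) = c *\<^sub>R T x"
  unfolding cond_exp_op_def linear_iff by blast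

lemma T_diff: "cond_exp_op T e \<Longrightarrow> T (x - y) = T x - T y"
proof -
  assume h: "cond_exp_op T e"
  have "T x = T ((x - y) + y)" by simp
  also have "\<dots> = T (x - y) + T y" by (rule T_add[OF h])
  finally show ?thesis by (simp add: algebra_simps)
qed

lemma T_nonneg: "cond_exp_op T e \<Longrightarrow> 0 \<le> x \<Longrightarrow> 0 \<le> T x"
  unfolding cond_exp_op_def strictly_positive_def by blast

lemma T_mono: "cond_exp_op T e \<Longrightarrow> x \<le> y \<Longrightarrow> T x \<le> T y"
proof -
  assume h: "cond_exp_op T e" "x \<le> y"
  have "0 \<le> T (y - x)" using h by (intro T_nonneg[OF h(1)]) simp
  thus ?thesis unfolding T_diff[OF h(1)] by simp
qed

lemma weak_unit_inf:
  fixes u e :: "'a::{ordered_real_vector,conditionally_complete_lattice}"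
  assumes we: "weak_order_unit e" and u0: "0 \<le> u"
  shows "Inf (range (\<lambda>n::nat. rpos (u - real n *\<^sub>R e))) = 0"
proof -
  have e0: "0 \<le> e" and U: "band_gen e = UNIV" using we unfolding weak_order_unit_def by auto
  let ?D = "range (\<lambda>n::nat. rpos (u - real n *\<^sub>R e))"
  let ?w = "Inf ?D"
  have bb: "bdd_below ?D" by (rule bdd_belowI[of _ 0]) (auto simp: rpos_nonneg)
  have w0: "0 \<le> ?w" by (rule cInf_greatest) (auto simp: rpos_nonneg)
  have wle: "?w \<le> rpos (u - real n *\<^sub>R e)" for n :: nat by (rule cInf_lower[OF rangeI bb])
  let ?q = "inf ?w e"
  have "real n *\<^sub>R ?q \<le> u" for n :: nat
  proof -
    have "real n *\<^sub>R ?q = inf (real n *\<^sub>R ?w) (real n *\<^sub>R e)" by (rule scaleR_inf') simp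
    also have "\<dots> \<le> inf (real n *\<^sub>R rpos (u - real n *\<^sub>R e)) (real n *\<^sub>R e)"
      by (intro inf_mono order_refl scaleR_left_mono wle) simp
    also have "\<dots> \<le> u" by (rule keyK[OF u0]) (use e0 in \<open>simp_all add: scaleR_nonneg_nonneg\<close>)
    finally show ?thesis .
  qed
  hence "?q \<le> 0" by (rule arch)
  moreover have "0 \<le> ?q" using w0 e0 by simp
  ultimately have q: "?q = 0" by (rule antisym)
  have "inf (rabs e) (rabs ?w) = 0"
    unfolding rabs_of_nonneg[OF w0] rabs_of_nonneg[OF e0] using q by (simp only: inf_commute)
  hence "e \<in> disj_compl {?w}" unfolding disj_compl_def by blast
  hence "band_gen e \<subseteq> disj_compl {?w}" by (intro band_gen_min disj_band)
  hence "?w \<in> disj_compl {?w}" using U by blast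
  hence "inf (rabs ?w) (rabs ?w) = 0" unfolding disj_compl_def by blast
  hence "rabs ?w = 0" by simp
  thus ?thesis by (rule rabs_zero)
qed



theorem mainTheorem9:
  fixes T :: "'a::{ordered_real_vector,conditionally_complete_lattice} \<Rightarrow> 'a"
    and e :: 'a
    and xn :: "'i::preorder \<Rightarrow> 'a"
    and x :: 'a
  assumes "weak_order_unit e"
    and "cond_exp_op T e"
    and "T e = e"
    and "directed_index TYPE('i)"
  shows "((\<forall>\<epsilon>>0. oconv (\<lambda>a. T (band_proj (rpos (rabs (xn a - x) - \<epsilon> *\<^sub>R e)) e)) 0)
           \<longleftrightarrow> (\<forall>u. 0 \<le> u \<longrightarrow> oconv (\<lambda>a. T (inf (rabs (xn a - x)) u)) 0))
       \<and> ((\<forall>u. 0 \<le> u \<longrightarrow> oconv (\<lambda>a. T (inf (rabs (xn a - x)) u)) 0)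
           \<longleftrightarrow> oconv (\<lambda>a. T (inf (rabs (xn a - x)) e)) 0)"
proof -
  note we = assms(1) and ce = assms(2) and Te = assms(3) and dir = assms(4)
  have e0: "0 \<le> e" using we unfolding weak_order_unit_def by auto
  have oc: "order_continuous T" using ce unfolding cond_exp_op_def by auto
  define Y where "Y a = rabs (xn a - x)" for a
  have Y0: "0 \<le> Y a" for a unfolding Y_def by (rule rabs_nonneg)
  define g where "g a = T (inf (Y a) e)" for a
  have g0: "0 \<le> g a" for a unfolding g_def using Y0 e0 by (intro T_nonneg[OF ce]) simp
  have gle: "g a \<le> e" for a unfolding g_def using T_mono[OF ce, of "inf (Y a) e" e] Te by simp
  have eEg: "e \<in> EB g" unfolding EB_def using e0 gle rabs_of_nonneg[OF g0] by auto
  define A where "A \<longleftrightarrow> (\<forall>\<epsilon>>0. oconv (\<lambda>a. T (band_proj (rpos (rabs (xn a - x) - \<epsilon> *\<^sub>R e)) e)) 0)"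
  define B where "B \<longleftrightarrow> (\<forall>u. 0 \<le> u \<longrightarrow> oconv (\<lambda>a. T (inf (rabs (xn a - x)) u)) 0)"
  define C where "C \<longleftrightarrow> oconv (\<lambda>a. T (inf (rabs (xn a - x)) e)) 0"
  have Cg: "C \<longleftrightarrow> oconv g 0" unfolding C_def g_def Y_def ..
  define W where "W \<epsilon> a = rpos (Y a - \<epsilon> *\<^sub>R e)" for \<epsilon> a
  define h where "h \<epsilon> a = T (Sp (W \<epsilon> a) e)" for \<epsilon> a
  have hproj: "(\<lambda>a. T (band_proj (rpos (rabs (xn a - x) - \<epsilon> *\<^sub>R e)) e)) = h \<epsilon>" for \<epsilon>
    unfolding h_def W_def Y_def using proj_eq[OF rpos_nonneg e0] by simp
  have Ah: "A \<longleftrightarrow> (\<forall>\<epsilon>>0. oconv (h \<epsilon>) 0)" unfolding A_def hproj ..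
  have h0: "0 \<le> h \<epsilon> a" for \<epsilon> a unfolding h_def by (intro T_nonneg[OF ce] Sp_nonneg e0)
  have hle: "h \<epsilon> a \<le> e" for \<epsilon> a unfolding h_def using T_mono[OF ce Sp_le_e[of "W \<epsilon> a" e]] Te by simp
  have eEh: "e \<in> EB (h \<epsilon>)" for \<epsilon> unfolding EB_def using e0 hle rabs_of_nonneg[OF h0] by auto

  have BC: "B \<Longrightarrow> C" unfolding B_def C_def using e0 by blast

  have CB: "B" if C: "C"
  proof -
    have Cg': "oconv g 0" using C Cg by simp
    show "B" unfolding B_def
    proof (intro allI impI)
      fix u :: 'a assume u0: "0 \<le> u"
      define f where "f a = T (inf (Y a) u)" for a
      have f0: "0 \<le> f a" for a unfolding f_def using Y0 u0 by (intro T_nonneg[OF ce]) simp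
      have fle: "f a \<le> T u" for a unfolding f_def by (intro T_mono[OF ce]) simp
      have Tu0: "0 \<le> T u" by (rule T_nonneg[OF ce u0])
      have v0: "T u \<in> EB f" unfolding EB_def using Tu0 fle rabs_of_nonneg[OF f0] by auto
      define t where "t n = T (rpos (u - real n *\<^sub>R e))" for n :: nat
      define cn where "cn n = max (real n) 1" for n :: nat
      have cn1: "1 \<le> cn n" for n unfolding cn_def by simp
      have t0: "0 \<le> t n" for n unfolding t_def by (intro T_nonneg[OF ce] rpos_nonneg)
      have pw: "f a \<le> cn n *\<^sub>R g a + t n" for a n
      proof -
        have ne0: "0 \<le> real n *\<^sub>R e" using e0 by (simp add: scaleR_nonneg_nonneg)
        have "u \<le> real n *\<^sub>R e + rpos (u - real n *\<^sub>R e)"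
          using le_rpos[of "u - real n *\<^sub>R e"] by (simp add: algebra_simps)
        hence "inf (Y a) u \<le> inf (Y a) (real n *\<^sub>R e + rpos (u - real n *\<^sub>R e))"
          by (intro inf_mono order_refl)
        also have "\<dots> \<le> inf (Y a) (real n *\<^sub>R e) + inf (Y a) (rpos (u - real n *\<^sub>R e))"
          by (rule inf_add_le[OF Y0 ne0 rpos_nonneg])
        also have "\<dots> \<le> cn n *\<^sub>R inf (Y a) e + rpos (u - real n *\<^sub>R e)"
        proof (rule add_mono)
          have "inf (Y a) (real n *\<^sub>R e) = inf (real n *\<^sub>R e) (Y a)" by (rule inf_commute)
          also have "\<dots> \<le> max (real n) 1 *\<^sub>R inf e (Y a)"
            by (rule inf_scale_le[OF _ Y0 e0]) simp
          finally show "inf (Y a) (real n *\<^sub>R e) \<le> cn n *\<^sub>R inf (Y a) e"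
            unfolding cn_def by (simp add: inf_commute)
          show "inf (Y a) (rpos (u - real n *\<^sub>R e)) \<le> rpos (u - real n *\<^sub>R e)" by simp
        qed
        finally have "T (inf (Y a) u) \<le> T (cn n *\<^sub>R inf (Y a) e + rpos (u - real n *\<^sub>R e))"
          by (rule T_mono[OF ce])
        thus ?thesis unfolding f_def g_def t_def T_add[OF ce] T_scale[OF ce] .
      qed
      have "oconv f 0"
      proof (rule oc_intro[OF dir v0])
        fix m assume mlb: "\<forall>v\<in>EB f. m \<le> v"
        have mt: "m \<le> t n" for n
        proof -
          have "(1 / cn n) *\<^sub>R (m - t n) \<le> z" if z: "z \<in> EB g" for z
          proof -
            obtain a0 where a0: "\<forall>a. a0 \<le> a \<longrightarrow> rabs (g a) \<le> z" and z0: "0 \<le> z"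
              using z unfolding EB_def by blast
            have "cn n *\<^sub>R z + t n \<in> EB f" unfolding EB_def
            proof (intro CollectI conjI exI[of _ a0] allI impI)
              show "0 \<le> cn n *\<^sub>R z + t n" using cn1[of n] z0 t0[of n]
                by (intro add_nonneg_nonneg scaleR_nonneg_nonneg) simp_all
              fix a assume "a0 \<le> a"
              hence "g a \<le> z" using a0 rabs_of_nonneg[OF g0] by simp
              hence "cn n *\<^sub>R g a \<le> cn n *\<^sub>R z" using cn1[of n] by (intro scaleR_left_mono) simp_all
              hence "cn n *\<^sub>R g a + t n \<le> cn n *\<^sub>R z + t n" by (rule add_right_mono)
              hence "f a \<le> cn n *\<^sub>R z + t n" using pw[of a n] by (rule order_trans[rotated])
              thus "rabs (f a) \<le> cn n *\<^sub>R z + t n" using rabs_of_nonneg[OF f0] by simp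
            qed
            hence "m \<le> cn n *\<^sub>R z + t n" using mlb by blast
            hence "m - t n \<le> cn n *\<^sub>R z" by (simp add: diff_le_eq)
            hence "(1 / cn n) *\<^sub>R (m - t n) \<le> (1 / cn n) *\<^sub>R (cn n *\<^sub>R z)"
              using cn1[of n] by (intro scaleR_left_mono) simp_all
            thus ?thesis using cn1[of n] by simp
          qed
          hence "(1 / cn n) *\<^sub>R (m - t n) \<le> 0" by (intro oc_imp[OF Cg']) blast
          hence "cn n *\<^sub>R ((1 / cn n) *\<^sub>R (m - t n)) \<le> cn n *\<^sub>R 0"
            using cn1[of n] by (intro scaleR_left_mono) simp_all
          hence "m - t n \<le> 0" using cn1[of n] by simp
          thus ?thesis by simp
        qed
        let ?D = "range (\<lambda>n::nat. rpos (u - real n *\<^sub>R e))"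
        have Dne: "?D \<noteq> {}" by simp
        have Dnn: "\<forall>z\<in>?D. 0 \<le> z" by (auto simp: rpos_nonneg)
        have Ddd: "down_directed ?D" unfolding down_directed_def
        proof (intro ballI)
          fix z1 z2 assume "z1 \<in> ?D" "z2 \<in> ?D"
          then obtain n1 n2 :: nat where z: "z1 = rpos (u - real n1 *\<^sub>R e)" "z2 = rpos (u - real n2 *\<^sub>R e)"
            by blast
          have mono: "rpos (u - real (max n1 n2) *\<^sub>R e) \<le> rpos (u - real k *\<^sub>R e)"
            if "k \<le> max n1 n2" for k :: nat
          proof (rule rpos_mono)
            have "real k *\<^sub>R e \<le> real (max n1 n2) *\<^sub>R e"
              using that e0 by (intro scaleR_right_mono) simp_all
            thus "u - real (max n1 n2) *\<^sub>R e \<le> u - real k *\<^sub>R e" by simp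
          qed
          show "\<exists>c\<in>?D. c \<le> z1 \<and> c \<le> z2"
            by (rule bexI[of _ "rpos (u - real (max n1 n2) *\<^sub>R e)"]) (use mono z in auto)
        qed
        have "Inf (T ` ?D) = 0"
          using oc weak_unit_inf[OF we u0] Dne Ddd Dnn unfolding order_continuous_def by blast
        moreover have "m \<le> Inf (T ` ?D)"
          by (rule cInf_greatest) (use mt in \<open>auto simp: t_def\<close>)
        ultimately show "m \<le> 0" by simp
      qed
      thus "oconv (\<lambda>a. T (inf (rabs (xn a - x)) u)) 0" unfolding f_def Y_def .
    qed
  qed

  have CA: "A" if C: "C"
  proof -
    have Cg': "oconv g 0" using C Cg by simp
    show "A" unfolding Ah
    proof (intro allI impI)
      fix \<epsilon> :: real assume ep: "\<epsilon> > 0"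
      define c where "c = max 1 (1 / \<epsilon>)"
      have c1: "1 \<le> c" unfolding c_def by simp
      have ple: "Sp (W \<epsilon> a) e \<le> c *\<^sub>R inf (Y a) e" for a
      proof (rule Sp_least)
        fix n :: nat
        let ?X = "inf (real n *\<^sub>R W \<epsilon> a) e"
        have "inf ((\<epsilon> * real n) *\<^sub>R W \<epsilon> a) (\<epsilon> *\<^sub>R e) \<le> Y a"
          unfolding W_def by (rule keyK[OF Y0]) (use ep e0 in \<open>simp_all add: scaleR_nonneg_nonneg\<close>)
        moreover have "inf ((\<epsilon> * real n) *\<^sub>R W \<epsilon> a) (\<epsilon> *\<^sub>R e) = \<epsilon> *\<^sub>R ?X"
          using scaleR_inf'[of \<epsilon> "real n *\<^sub>R W \<epsilon> a" e] ep by simp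
        ultimately have "\<epsilon> *\<^sub>R ?X \<le> Y a" by simp
        hence "(1/\<epsilon>) *\<^sub>R (\<epsilon> *\<^sub>R ?X) \<le> (1/\<epsilon>) *\<^sub>R Y a" using ep by (intro scaleR_left_mono) simp_all
        hence "?X \<le> (1/\<epsilon>) *\<^sub>R Y a" using ep by simp
        also have "\<dots> \<le> c *\<^sub>R Y a" unfolding c_def using Y0 by (intro scaleR_right_mono) simp_all
        finally have 1: "?X \<le> c *\<^sub>R Y a" .
        have "?X \<le> e" by simp
        also have "e \<le> c *\<^sub>R e" using c1 e0 scaleR_right_mono[of 1 c e] by simp
        finally have 2: "?X \<le> c *\<^sub>R e" .
        from 1 2 have "?X \<le> inf (c *\<^sub>R Y a) (c *\<^sub>R e)" by simp
        also have "\<dots> = c *\<^sub>R inf (Y a) e" using c1 by (intro scaleR_inf'[symmetric]) simp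
        finally show "?X \<le> c *\<^sub>R inf (Y a) e" .
      qed
      have hg: "h \<epsilon> a \<le> c *\<^sub>R g a" for a
        unfolding h_def g_def T_scale[OF ce, symmetric] by (rule T_mono[OF ce ple])
      show "oconv (h \<epsilon>) 0"
      proof (rule oc_intro[OF dir eEh])
        fix m assume mlb: "\<forall>v\<in>EB (h \<epsilon>). m \<le> v"
        have "(1/c) *\<^sub>R m \<le> z" if z: "z \<in> EB g" for z
        proof -
          obtain a0 where a0: "\<forall>a. a0 \<le> a \<longrightarrow> rabs (g a) \<le> z" and z0: "0 \<le> z"
            using z unfolding EB_def by blast
          have "c *\<^sub>R z \<in> EB (h \<epsilon>)" unfolding EB_def
          proof (intro CollectI conjI exI[of _ a0] allI impI)
            show "0 \<le> c *\<^sub>R z" using c1 z0 by (intro scaleR_nonneg_nonneg) simp_all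
            fix a assume "a0 \<le> a"
            hence "g a \<le> z" using a0 rabs_of_nonneg[OF g0] by simp
            hence "c *\<^sub>R g a \<le> c *\<^sub>R z" using c1 by (intro scaleR_left_mono) simp_all
            hence "h \<epsilon> a \<le> c *\<^sub>R z" using hg[of a] by (rule order_trans[rotated])
            thus "rabs (h \<epsilon> a) \<le> c *\<^sub>R z" using rabs_of_nonneg[OF h0] by simp
          qed
          hence "m \<le> c *\<^sub>R z" using mlb by blast
          hence "(1/c) *\<^sub>R m \<le> (1/c) *\<^sub>R (c *\<^sub>R z)" using c1 by (intro scaleR_left_mono) simp_all
          thus ?thesis using c1 by simp
        qed
        hence "(1/c) *\<^sub>R m \<le> 0" by (intro oc_imp[OF Cg']) blast
        hence "c *\<^sub>R ((1/c) *\<^sub>R m) \<le> c *\<^sub>R 0" using c1 by (intro scaleR_left_mono) simp_all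
        thus "m \<le> 0" using c1 by simp
      qed
    qed
  qed

  have AC: "C" if A: "A"
  proof -
    have Ah': "oconv (h \<epsilon>) 0" if "\<epsilon> > 0" for \<epsilon> using A Ah that by blast
    have "oconv g 0"
    proof (rule oc_intro[OF dir eEg])
      fix m assume mlb: "\<forall>v\<in>EB g. m \<le> v"
      show "m \<le> 0"
      proof (rule arch2[OF e0])
        fix \<epsilon> :: real assume ep: "\<epsilon> > 0"
        have pw: "g a \<le> \<epsilon> *\<^sub>R e + h \<epsilon> a" for a
        proof -
          have "rpos (inf (Y a) e - \<epsilon> *\<^sub>R e) \<le> inf (W \<epsilon> a) e"
          proof (rule le_infI)
            show "rpos (inf (Y a) e - \<epsilon> *\<^sub>R e) \<le> W \<epsilon> a" unfolding W_def
              by (rule rpos_mono) simp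
            have "inf (Y a) e - \<epsilon> *\<^sub>R e \<le> e - 0"
              using ep e0 by (intro diff_mono scaleR_nonneg_nonneg) simp_all
            thus "rpos (inf (Y a) e - \<epsilon> *\<^sub>R e) \<le> e" unfolding rpos_def using e0 by simp
          qed
          also have "\<dots> \<le> Sp (W \<epsilon> a) e" by (rule Sp_ge)
          finally have P: "rpos (inf (Y a) e - \<epsilon> *\<^sub>R e) \<le> Sp (W \<epsilon> a) e" .
          have "inf (Y a) e \<le> \<epsilon> *\<^sub>R e + rpos (inf (Y a) e - \<epsilon> *\<^sub>R e)"
            using le_rpos[of "inf (Y a) e - \<epsilon> *\<^sub>R e"] by (simp add: algebra_simps)
          also have "\<dots> \<le> \<epsilon> *\<^sub>R e + Sp (W \<epsilon> a) e" using P by (rule add_left_mono)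
          finally have "inf (Y a) e \<le> \<epsilon> *\<^sub>R e + Sp (W \<epsilon> a) e" .
          hence "T (inf (Y a) e) \<le> T (\<epsilon> *\<^sub>R e + Sp (W \<epsilon> a) e)" by (rule T_mono[OF ce])
          thus ?thesis unfolding g_def h_def T_add[OF ce] T_scale[OF ce] Te .
        qed
        have "m - \<epsilon> *\<^sub>R e \<le> z" if z: "z \<in> EB (h \<epsilon>)" for z
        proof -
          obtain a0 where a0: "\<forall>a. a0 \<le> a \<longrightarrow> rabs (h \<epsilon> a) \<le> z" and z0: "0 \<le> z"
            using z unfolding EB_def by blast
          have "\<epsilon> *\<^sub>R e + z \<in> EB g" unfolding EB_def
          proof (intro CollectI conjI exI[of _ a0] allI impI)
            show "0 \<le> \<epsilon> *\<^sub>R e + z" using ep e0 z0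
              by (intro add_nonneg_nonneg scaleR_nonneg_nonneg) simp_all
            fix a assume "a0 \<le> a"
            hence "h \<epsilon> a \<le> z" using a0 rabs_of_nonneg[OF h0] by simp
            hence "\<epsilon> *\<^sub>R e + h \<epsilon> a \<le> \<epsilon> *\<^sub>R e + z" by (rule add_left_mono)
            hence "g a \<le> \<epsilon> *\<^sub>R e + z" using pw[of a] by (rule order_trans[rotated])
            thus "rabs (g a) \<le> \<epsilon> *\<^sub>R e + z" using rabs_of_nonneg[OF g0] by simp
          qed
          hence "m \<le> \<epsilon> *\<^sub>R e + z" using mlb by blast
          thus ?thesis by (simp add: diff_le_eq add.commute)
        qed
        hence "m - \<epsilon> *\<^sub>R e \<le> 0" by (intro oc_imp[OF Ah'[OF ep]]) blast
        thus "m \<le> \<epsilon> *\<^sub>R e" by simp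
      qed
    qed
    thus "C" using Cg by simp
  qed

  have "(A \<longleftrightarrow> B) \<and> (B \<longleftrightarrow> C)" using AC CA CB BC by blast
  thus ?thesis unfolding A_def B_def C_def .
qed

end
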